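(* Let $p>1$ and let $\varphi:\mathbb{R}^n\to\mathbb{R}\cup\{+\infty\}$ be a proper lower semicontinuous coercive function. If for some $r>0$ and $\lambda\in\mathbb{R}$ we have $\{x:\varphi(x)\le\lambda\}\subseteq\mathbb{B}(0;r)$, then there exists $\hat\gamma>0$ such that for each $\gamma\in(0,\hat\gamma]$, $\{x:\varphi^p_\gamma(x)\le\lambda\}\subseteq\mathbb{B}(0;r)$.
   Context: $\varphi^p_\gamma(x):=\inf_{y\in\mathbb{R}^n}\big(\varphi(y)+\frac{1}{p\gamma}\|x-y\|^p\big)$ (high-order Moreau envelope); $\mathbb{B}(0;r)$ is the open Euclidean ball of radius $r$ centered at the origin. *)

theory Defs
  imports "HOL-Analysis.Analysis" "HOL-Library.Extended_Real"
begin

text \<open>Extended-real-valued functions on R^n, modelled as real ^ 'n \<Rightarrow> ereal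
  (the value -\<infinity> is excluded by properness).\<close>

definition proper_fun :: "('a \<Rightarrow> ereal) \<Rightarrow> bool" where
  "proper_fun \<phi> \<longleftrightarrow> (\<forall>x. \<phi> x \<noteq> -\<infinity>) \<and> (\<exists>x. \<phi> x < \<infinity>)"

definition lsc_fun :: "('a::topological_space \<Rightarrow> ereal) \<Rightarrow> bool" where
  "lsc_fun \<phi> \<longleftrightarrow> (\<forall>x. \<phi> x \<le> Liminf (at x) \<phi>)"

definition coercive_fun :: "('a::real_normed_vector \<Rightarrow> ereal) \<Rightarrow> bool" where
  "coercive_fun \<phi> \<longleftrightarrow> (\<phi> \<longlongrightarrow> \<infinity>) at_infinity"

definition moreau_env :: "real \<Rightarrow> real \<Rightarrow> ('a::real_normed_vector \<Rightarrow> ereal) \<Rightarrow> 'a \<Rightarrow> ereal" where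
  "moreau_env p \<gamma> \<phi> x = (INF y. \<phi> y + ereal (norm (x - y) powr p / (p * \<gamma>)))"

end

theory Submission
  imports Defs
begin

lemma lsc_closed_sublevel:
  fixes \<phi> :: "'a::topological_space \<Rightarrow> ereal"
  assumes "lsc_fun \<phi>"
  shows "closed {x. \<phi> x \<le> c}"
proof -
  have "open {x. c < \<phi> x}"
  proof (subst open_subopen, intro ballI)
    fix x assume "x \<in> {x. c < \<phi> x}"
    then have "c < Liminf (at x) \<phi>" using assms unfolding lsc_fun_def
      by (metis mem_Collect_eq order_less_le_trans)
    then have "eventually (\<lambda>y. \<phi> y > c) (at x)" by (rule less_LiminfD)
    then have "eventually (\<lambda>y. y \<noteq> x \<longrightarrow> \<phi> y > c) (nhds x)"
      by (simp add: eventually_at_filter)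
    then obtain S where S: "open S" "x \<in> S" "\<forall>y\<in>S. y \<noteq> x \<longrightarrow> \<phi> y > c"
      unfolding eventually_nhds by blast
    show "\<exists>T. open T \<and> x \<in> T \<and> T \<subseteq> {x. c < \<phi> x}"
      using S \<open>x \<in> {x. c < \<phi> x}\<close> by (intro exI[of _ S]) auto
  qed
  moreover have "{x. \<phi> x \<le> c} = - {x. c < \<phi> x}" by (auto simp: not_less)
  ultimately show ?thesis by (simp add: closed_def)
qed

lemma coercive_bounded_sublevel:
  fixes \<phi> :: "'a::real_normed_vector \<Rightarrow> ereal"
  assumes "coercive_fun \<phi>"
  shows "bounded {x. \<phi> x \<le> ereal c}"
proof -
  have "eventually (\<lambda>y. \<phi> y > ereal c) at_infinity"
    using assms unfolding coercive_fun_def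
    by (rule order_tendstoD) simp
  then obtain b where b: "\<forall>y. b \<le> norm y \<longrightarrow> \<phi> y > ereal c"
    unfolding eventually_at_infinity by blast
  have "{x. \<phi> x \<le> ereal c} \<subseteq> cball 0 b"
  proof
    fix x assume "x \<in> {x. \<phi> x \<le> ereal c}"
    then show "x \<in> cball 0 b" using b[rule_format, of x] by (cases "b \<le> norm x") auto
  qed
  then show ?thesis using bounded_cball bounded_subset by blast
qed

lemma nest_empty:
  fixes F :: "nat \<Rightarrow> 'b::heine_borel set"
  assumes "\<And>n. compact (F n)" "\<And>m n. m \<le> n \<Longrightarrow> F n \<subseteq> F m" "\<Inter>(range F) = {}"
  shows "\<exists>n. F n = {}"
  using compact_nest[of F] assms by blast

theorem proposition3:
  fixes \<phi> :: "real ^ 'n \<Rightarrow> ereal" and p r :: real and lam :: real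
  assumes "p > 1"
    and "proper_fun \<phi>" and "lsc_fun \<phi>" and "coercive_fun \<phi>"
    and "r > 0"
    and "{x. \<phi> x \<le> ereal lam} \<subseteq> ball 0 r"
  shows "\<exists>\<gamma>h>0. \<forall>\<gamma>. 0 < \<gamma> \<and> \<gamma> \<le> \<gamma>h \<longrightarrow>
           {x. moreau_env p \<gamma> \<phi> x \<le> ereal lam} \<subseteq> ball 0 r"
proof -
  have ninf: "\<And>x. \<phi> x \<noteq> -\<infinity>" using assms(2) unfolding proper_fun_def by blast
  have cl: "\<And>c. closed {x. \<phi> x \<le> c}" using lsc_closed_sublevel[OF assms(3)] .
  have bd: "\<And>c. bounded {x. \<phi> x \<le> ereal c}" using coercive_bounded_sublevel[OF assms(4)] .
  define L where "L k = {x. \<phi> x \<le> ereal (- real k)}" for k :: nat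
  have "\<exists>k. L k = {}"
  proof (rule nest_empty)
    show "compact (L n)" for n unfolding L_def using cl bd by (simp add: compact_eq_bounded_closed)
    show "L n \<subseteq> L m" if "m \<le> n" for m n
    proof
      have *: "ereal (- real n) \<le> ereal (- real m)" using that by simp
      fix x assume "x \<in> L n"
      then have "\<phi> x \<le> ereal (- real n)" unfolding L_def by simp
      then show "x \<in> L m" unfolding L_def using order.trans[OF _ *] by simp
    qed
    show "\<Inter>(range L) = {}"
    proof (rule ccontr)
      assume "\<Inter>(range L) \<noteq> {}"
      then obtain x where x: "\<And>k. \<phi> x \<le> ereal (- real k)" unfolding L_def by auto
      show False
      proof (cases "\<phi> x")
        case (real a)
        obtain k :: nat where "real k > - a" using reals_Archimedean2 by blast
        then show False using x[of k] real by simp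
      next
        case PInf then show False using x[of 0] by simp
      next
        case MInf then show False using ninf by blast
      qed
    qed
  qed
  then obtain k where "L k = {}" by blast
  then have lb: "\<And>y. \<phi> y > ereal (- real k)" unfolding L_def by (auto simp: not_le[symmetric])
  define M where "M = real k"
  define K where "K j = {x. \<phi> x \<le> ereal (lam + 1 / (real j + 1))} \<inter> {x. r - 1 / (real j + 1) \<le> norm x}" for j :: nat
  have "\<exists>j. K j = {}"
  proof (rule nest_empty)
    show "compact (K n)" for n unfolding K_def
      using cl bd closed_Int[OF cl closed_Collect_le[OF continuous_on_const continuous_on_norm_id]]
      by (simp add: compact_eq_bounded_closed bounded_Int)
    show "K n \<subseteq> K m" if "m \<le> n" for m n
    proof -
      have "1 / (real n + 1) \<le> 1 / (real m + 1)" using that by (simp add: frac_le)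
      then have *: "ereal (lam + 1 / (real n + 1)) \<le> ereal (lam + 1 / (real m + 1))" by simp
      show ?thesis
      proof
        fix x assume "x \<in> K n"
        then have "\<phi> x \<le> ereal (lam + 1 / (real n + 1))" "r - 1 / (real n + 1) \<le> norm x"
          unfolding K_def by auto
        then show "x \<in> K m" unfolding K_def using order.trans[OF _ *] \<open>1 / (real n + 1) \<le> 1 / (real m + 1)\<close> by auto
      qed
    qed
    show "\<Inter>(range K) = {}"
    proof (rule ccontr)
      assume "\<Inter>(range K) \<noteq> {}"
      then obtain x where x1: "\<And>j. \<phi> x \<le> ereal (lam + 1 / (real j + 1))"
          and x2: "\<And>j. r - 1 / (real j + 1) \<le> norm x" unfolding K_def by auto
      have "\<phi> x \<le> ereal lam"
      proof (rule ereal_le_epsilon2)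
        fix e :: real assume "e > 0"
        then obtain j :: nat where "1 / real (Suc j) < e"
          using nat_approx_posE by blast
        then have "1 / (real j + 1) < e" by (simp add: add.commute)
        have *: "ereal (lam + 1 / (real j + 1)) \<le> ereal lam + ereal e"
          using \<open>1 / (real j + 1) < e\<close> by simp
        show "\<phi> x \<le> ereal lam + ereal e" using order.trans[OF x1[of j] *] .
      qed
      moreover have "r \<le> norm x"
      proof (rule field_le_epsilon)
        fix e :: real assume "e > 0"
        then obtain j :: nat where "1 / real (Suc j) < e"
          using nat_approx_posE by blast
        then have "1 / (real j + 1) < e" by (simp add: add.commute)
        show "r \<le> norm x + e" using x2[of j] \<open>1 / (real j + 1) < e\<close> by linarith
      qed
      ultimately show False using assms(6) by auto
    qed
  qed
  then obtain j where "K j = {}" by blast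
  define \<delta> where "\<delta> = 1 / (real j + 1)"
  have dpos: "\<delta> > 0" unfolding \<delta>_def by simp
  have gap: "\<And>y. \<phi> y \<le> ereal (lam + \<delta>) \<Longrightarrow> norm y < r - \<delta>"
    using \<open>K j = {}\<close> unfolding K_def \<delta>_def by (auto simp: not_le[symmetric])
  define B where "B = max 1 (lam + \<delta> + M)"
  have Bpos: "B > 0" unfolding B_def by simp
  define gh where "gh = \<delta> powr p / (p * B)"
  have ghpos: "gh > 0" unfolding gh_def using dpos Bpos assms(1) by simp
  show ?thesis
  proof (intro exI[of _ gh] conjI ghpos allI impI subsetI)
    fix \<gamma> x assume g: "0 < \<gamma> \<and> \<gamma> \<le> gh" and "x \<in> {x. moreau_env p \<gamma> \<phi> x \<le> ereal lam}"
    then have "moreau_env p \<gamma> \<phi> x < ereal (lam + \<delta>)"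
      using dpos by (simp add: le_less_trans)
    then obtain y where y: "\<phi> y + ereal (norm (x - y) powr p / (p * \<gamma>)) < ereal (lam + \<delta>)"
      unfolding moreau_env_def INF_less_iff by blast
    obtain a where a: "\<phi> y = ereal a"
      using y ninf[of y] by (cases "\<phi> y") auto
    define t where "t = norm (x - y) powr p / (p * \<gamma>)"
    have t0: "t \<ge> 0" unfolding t_def using g assms(1) by simp
    have at: "a + t < lam + \<delta>" using y a unfolding t_def by simp
    have aM: "a > - M" using lb[of y] a unfolding M_def by simp
    have "norm y < r - \<delta>" using gap[of y] a at t0 by simp
    have "t < B" using at aM unfolding B_def by simp
    then have "norm (x - y) powr p < p * \<gamma> * B"
      unfolding t_def using g assms(1) by (simp add: divide_less_eq mult.commute)
    also have "\<dots> \<le> p * gh * B" using g assms(1) Bpos by simp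
    also have "\<dots> = \<delta> powr p" unfolding gh_def using assms(1) Bpos by simp
    finally have lt: "norm (x - y) powr p < \<delta> powr p" .
    have "norm (x - y) < \<delta>"
    proof (rule ccontr)
      assume "\<not> norm (x - y) < \<delta>"
      then have "\<delta> powr p \<le> norm (x - y) powr p" using dpos assms(1) by (intro powr_mono2) auto
      with lt show False by simp
    qed
    then have "norm x < r"
      using \<open>norm y < r - \<delta>\<close> norm_triangle_ineq[of "x - y" y] by simp
    then show "x \<in> ball 0 r" by simp
  qed
qed

end
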